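(* Let $K\subseteq\mathbb{R}^n$ be a proper cone and let $A\in\mathbb{R}^{n\times n}$ be $K$-monotone. Let $A=U-V$ be a $K$-regular splitting. Let $U=F-G=\overline{F}-\overline{G}$ be two $K$-weak regular splittings of type II of $U$ such that $VF^{-1}G=GF^{-1}V$ and $V\overline{F}^{-1}\overline{G}=\overline{G}\,\overline{F}^{-1}V$. For a positive integer $s$ let $$T_{s}=(F^{-1}G)^{s}+\sum_{j=0}^{s-1}(F^{-1}G)^{j}F^{-1}V,\qquad \overline{T}_{s}=(\overline{F}^{-1}\overline{G})^{s}+\sum_{j=0}^{s-1}(\overline{F}^{-1}\overline{G})^{j}\overline{F}^{-1}V.$$ If $G\geq_K GF^{-1}G$ and $\overline{G}\,\overline{F}^{-1}\geq_K GF^{-1}$, then $\rho(T_s)\leq\rho(\overline{T}_s)<1$.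
   Context: A proper cone $K\subseteq\mathbb{R}^n$ is a closed, convex, pointed, solid cone. For $M\in\mathbb{R}^{n\times n}$, $M\geq_K 0$ means $MK\subseteq K$, and $M\geq_K N$ means $M-N\geq_K0$. A matrix $A$ is $K$-monotone if $A$ is nonsingular and $A^{-1}\geq_K 0$. A splitting $A=U-V$ (with $U$ nonsingular) is $K$-regular if $U^{-1}\geq_K 0$ and $V\geq_K 0$; it is a $K$-weak regular splitting of type II if $U^{-1}\geq_K 0$ and $VU^{-1}\geq_K 0$. $\rho$ denotes spectral radius. *)

theory Defs
  imports "HOL-Analysis.Analysis"
begin

definition proper_cone :: "(real ^ 'n) set \<Rightarrow> bool" where
  "proper_cone K \<longleftrightarrow> cone K \<and> closed K \<and> convex K \<and>
     K \<inter> uminus ` K = {0} \<and> interior K \<noteq> {}"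

definition K_nonneg :: "(real ^ 'n) set \<Rightarrow> real ^ 'n ^ 'n \<Rightarrow> bool" where
  "K_nonneg K M \<longleftrightarrow> (\<forall>x\<in>K. M *v x \<in> K)"

definition K_ge :: "(real ^ 'n) set \<Rightarrow> real ^ 'n ^ 'n \<Rightarrow> real ^ 'n ^ 'n \<Rightarrow> bool" where
  "K_ge K M N \<longleftrightarrow> K_nonneg K (M - N)"

definition K_monotone :: "(real ^ 'n) set \<Rightarrow> real ^ 'n ^ 'n \<Rightarrow> bool" where
  "K_monotone K A \<longleftrightarrow> invertible A \<and> K_nonneg K (matrix_inv A)"

definition K_regular_splitting ::
  "(real ^ 'n) set \<Rightarrow> real ^ 'n ^ 'n \<Rightarrow> real ^ 'n ^ 'n \<Rightarrow> real ^ 'n ^ 'n \<Rightarrow> bool" where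
  "K_regular_splitting K A U V \<longleftrightarrow> A = U - V \<and> invertible U \<and>
     K_nonneg K (matrix_inv U) \<and> K_nonneg K V"

definition K_weak_regular_splitting_II ::
  "(real ^ 'n) set \<Rightarrow> real ^ 'n ^ 'n \<Rightarrow> real ^ 'n ^ 'n \<Rightarrow> real ^ 'n ^ 'n \<Rightarrow> bool" where
  "K_weak_regular_splitting_II K A U V \<longleftrightarrow> A = U - V \<and> invertible U \<and>
     K_nonneg K (matrix_inv U) \<and> K_nonneg K (V ** matrix_inv U)"

definition cmat :: "real ^ 'n ^ 'm \<Rightarrow> complex ^ 'n ^ 'm" where
  "cmat M = (\<chi> i j. complex_of_real (M $ i $ j))"

definition spectral_radius :: "real ^ 'n ^ 'n \<Rightarrow> real" where
  "spectral_radius M =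
     Max {cmod l | l. \<exists>v :: complex ^ 'n. v \<noteq> 0 \<and> cmat M *v v = l *s v}"

primrec mpow :: "real ^ 'n ^ 'n \<Rightarrow> nat \<Rightarrow> real ^ 'n ^ 'n" where
  "mpow M 0 = mat 1"
| "mpow M (Suc k) = M ** mpow M k"

end

theory Submission
  imports Defs "Jordan_Normal_Form.Spectral_Radius"
begin
hide_const (open) Matrix.mat Spectral_Radius.spectral_radius Spectral_Radius.spectrum


lemma inv_props:
  fixes A :: "real^'n^'n"
  assumes "invertible A"
  shows "A ** matrix_inv A = mat 1" "matrix_inv A ** A = mat 1"
proof -
  have "\<exists>A'. A ** A' = mat 1 \<and> A' ** A = mat 1" using assms unfolding invertible_def by auto
  from someI_ex[OF this] show "A ** matrix_inv A = mat 1" "matrix_inv A ** A = mat 1"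
    unfolding matrix_inv_def by auto
qed

lemma mm_ldiff: "(A::real^'n^'n) ** (B - C) = A ** B - A ** C"
  by (simp add: matrix_matrix_mult_def Finite_Cartesian_Product.vec_eq_iff sum_subtractf right_diff_distrib)
lemma mm_radd: "((A::real^'n^'n) + B) ** C = A ** C + B ** C"
  by (simp add: matrix_matrix_mult_def Finite_Cartesian_Product.vec_eq_iff sum.distrib distrib_right)
lemma mm_rdiff: "((A::real^'n^'n) - B) ** C = A ** C - B ** C"
  by (simp add: matrix_matrix_mult_def Finite_Cartesian_Product.vec_eq_iff sum_subtractf left_diff_distrib)

lemma mm_rsum: "(\<Sum>i<(s::nat). (f i :: real^'n^'n)) ** (C::real^'n^'n) = (\<Sum>i<s. f i ** C)"
  by (induction s) (auto simp: mm_radd)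
lemma mm_lsum: "(C::real^'n^'n) ** (\<Sum>i<(s::nat). (f i :: real^'n^'n)) = (\<Sum>i<s. C ** f i)"
  by (induction s) (auto simp: matrix_add_ldistrib)

lemma mv_sum: "(\<Sum>i<(s::nat). (f i :: real^'n^'n)) *v (x::real^'n) = (\<Sum>i<s. f i *v x)"
  by (induction s) (auto simp: matrix_vector_mult_add_rdistrib)

lemma mpow_comm: "mpow M k ** M = M ** mpow M k"
  by (induction k) (auto simp: matrix_mul_assoc[symmetric])

lemma mpow_add: "mpow M (a + b) = mpow M a ** mpow M b"
  by (induction a) (auto simp: matrix_mul_assoc)

lemma mpow_conj:
  fixes M N P :: "real^'n^'n"
  assumes "M ** P = P ** N"
  shows "mpow M k ** P = P ** mpow N k"
proof (induction k)
  case 0 then show ?case by simp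
next
  case (Suc k)
  have "mpow M (Suc k) ** P = M ** (mpow M k ** P)" by (simp add: matrix_mul_assoc)
  also have "\<dots> = (M ** P) ** mpow N k" by (simp add: Suc matrix_mul_assoc)
  also have "\<dots> = P ** mpow N (Suc k)" by (simp add: assms matrix_mul_assoc)
  finally show ?case .
qed

section \<open>Cone facts\<close>

lemma pc_cc: "proper_cone K \<Longrightarrow> (\<forall>x\<in>K. \<forall>y\<in>K. x + y \<in> K) \<and> (\<forall>x\<in>K. \<forall>c\<ge>0. c *\<^sub>R x \<in> K)"
  unfolding proper_cone_def by (rule convex_cone[THEN iffD1]) (intro conjI; elim conjE; assumption)
lemma pc_add: "proper_cone K \<Longrightarrow> x \<in> K \<Longrightarrow> y \<in> K \<Longrightarrow> x + y \<in> K"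
  using pc_cc by blast
lemma pc_scale: "proper_cone K \<Longrightarrow> x \<in> K \<Longrightarrow> c \<ge> 0 \<Longrightarrow> c *\<^sub>R x \<in> K"
  using pc_cc by blast
lemma pc_ne: "proper_cone K \<Longrightarrow> K \<noteq> {}"
proof
  assume "proper_cone K" "K = {}"
  then show False unfolding proper_cone_def by simp
qed
lemma pc_0: "proper_cone K \<Longrightarrow> 0 \<in> K"
proof -
  assume K: "proper_cone K"
  then obtain x where "x \<in> K" using pc_ne by blast
  from pc_scale[OF K this, of 0] show "0 \<in> K" by simp
qed
lemma pc_pointed: "proper_cone K \<Longrightarrow> x \<in> K \<Longrightarrow> - x \<in> K \<Longrightarrow> x = 0"
proof -
  assume K: "proper_cone K" and x: "x \<in> K" and mx: "- x \<in> K"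
  have "x \<in> uminus ` K" using mx by (intro image_eqI[of _ _ "- x"]) auto
  with x have "x \<in> K \<inter> uminus ` K" by blast
  with K show "x = 0" unfolding proper_cone_def by blast
qed
lemma pc_sum: "proper_cone K \<Longrightarrow> (\<And>i. i < s \<Longrightarrow> f i \<in> K) \<Longrightarrow> (\<Sum>i<(s::nat). (f i :: real^'n)) \<in> K"
  by (induction s) (auto simp: pc_0 pc_add)

lemma Kn_mult: "K_nonneg K A \<Longrightarrow> K_nonneg K B \<Longrightarrow> K_nonneg K (A ** B)"
  unfolding K_nonneg_def by (simp add: matrix_vector_mul_assoc[symmetric])
lemma Kn_add: "proper_cone K \<Longrightarrow> K_nonneg K A \<Longrightarrow> K_nonneg K B \<Longrightarrow> K_nonneg K (A + B)"
  unfolding K_nonneg_def by (simp add: matrix_vector_mult_add_rdistrib pc_add)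
lemma Kn_id: "K_nonneg K (mat 1)"
  unfolding K_nonneg_def by simp
lemma Kn_sum: "proper_cone K \<Longrightarrow> (\<And>i. i < s \<Longrightarrow> K_nonneg K (f i)) \<Longrightarrow> K_nonneg K (\<Sum>i<(s::nat). (f i :: real^'n^'n))"
  unfolding K_nonneg_def by (simp add: mv_sum pc_sum)
lemma Kn_mpow: "K_nonneg K A \<Longrightarrow> K_nonneg K (mpow A k)"
  by (induction k) (auto simp: Kn_id Kn_mult)

lemma Kn_pow_diff:
  assumes K: "proper_cone K" and "K_nonneg K W" "K_nonneg K (Wb - W)"
  shows "K_nonneg K (mpow Wb k - mpow W k)"
proof (induction k)
  case 0 then show ?case by (simp add: K_nonneg_def pc_0[OF K])
next
  case (Suc k)
  have "Wb - W + W = Wb" by simp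
  then have Wb: "K_nonneg K Wb"
    using Kn_add[OF K assms(3,2)] by simp
  have "Wb ** (mpow Wb k - mpow W k) + (Wb - W) ** mpow W k
      = (Wb ** mpow Wb k - Wb ** mpow W k) + (Wb ** mpow W k - W ** mpow W k)"
    by (simp only: mm_ldiff mm_rdiff)
  also have "\<dots> = mpow Wb (Suc k) - mpow W (Suc k)" by simp
  finally have eq: "mpow Wb (Suc k) - mpow W (Suc k) = Wb ** (mpow Wb k - mpow W k) + (Wb - W) ** mpow W k" by simp
  have "K_nonneg K (Wb ** (mpow Wb k - mpow W k) + (Wb - W) ** mpow W k)"
    by (rule Kn_add[OF K Kn_mult[OF Wb Suc] Kn_mult[OF assms(3) Kn_mpow[OF assms(2)]]])
  then show ?case unfolding eq .
qed


lemma pc_conv_nz: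
  fixes K :: "(real^'n) set"
  assumes K: "proper_cone K"
  shows "convex (K - {0})"
  unfolding convex_def
proof (intro ballI allI impI)
  fix x y :: "real^'n" and u v :: real
  assume x: "x \<in> K - {0}" and y: "y \<in> K - {0}" and uv: "0 \<le> u" "0 \<le> v" "u + v = 1"
  have ux: "u *\<^sub>R x \<in> K" using pc_scale[OF K _ uv(1)] x by auto
  have vy: "v *\<^sub>R y \<in> K" using pc_scale[OF K _ uv(2)] y by auto
  have s: "u *\<^sub>R x + v *\<^sub>R y \<in> K" using pc_add[OF K ux vy] .
  have "u *\<^sub>R x + v *\<^sub>R y \<noteq> 0"
  proof
    assume "u *\<^sub>R x + v *\<^sub>R y = 0"
    then have "u *\<^sub>R x = - (v *\<^sub>R y)" by (simp add: eq_neg_iff_add_eq_0)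
    then have "- (u *\<^sub>R x) \<in> K" using vy by simp
    from pc_pointed[OF K ux this] have "u *\<^sub>R x = 0" .
    moreover from \<open>u *\<^sub>R x = - (v *\<^sub>R y)\<close> this have "v *\<^sub>R y = 0" by simp
    ultimately show False using x y uv by auto
  qed
  with s show "u *\<^sub>R x + v *\<^sub>R y \<in> K - {0}" by simp
qed

lemma pos_functional:
  assumes K: "proper_cone K"
  shows "\<exists>(e::real^'n) c. c > 0 \<and> (\<forall>x\<in>K. c * norm x \<le> e \<bullet> x)"
proof -
  define M where "M = K \<inter> sphere (0::real^'n) 1"
  have cK: "closed K" using K unfolding proper_cone_def by auto
  have cM: "compact M" unfolding M_def using cK by (intro closed_Int_compact) auto
  have sub: "convex hull M \<subseteq> K - {0}"
    by (rule hull_minimal) (auto simp: M_def pc_conv_nz[OF K])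
  have "compact (convex hull M)" using cM by (rule compact_convex_hull)
  then have cl: "closed (convex hull M)" by (rule compact_imp_closed)
  have "0 \<notin> convex hull M" using sub by auto
  from separating_hyperplane_closed_0[OF convex_convex_hull cl this]
  obtain a b where ab: "0 < b" "\<forall>x\<in>convex hull M. b < a \<bullet> x" by auto
  have "\<forall>x\<in>K. b * norm x \<le> a \<bullet> x"
  proof
    fix x assume x: "x \<in> K"
    show "b * norm x \<le> a \<bullet> x"
    proof (cases "x = 0")
      case True then show ?thesis by simp
    next
      case False
      have "(1 / norm x) *\<^sub>R x \<in> M" unfolding M_def
        using pc_scale[OF K x, of "1 / norm x"] False by auto
      then have "b < a \<bullet> ((1 / norm x) *\<^sub>R x)" using ab hull_subset[of M convex] by blast
      then have "b < (a \<bullet> x) / norm x" by (simp add: inner_scaleR_right)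
      then show ?thesis using False by (simp add: field_simps)
    qed
  qed
  then show ?thesis using ab(1) by blast
qed

lemma span_tendsto:
  fixes f :: "nat \<Rightarrow> real^'n^'n"
  assumes K: "proper_cone K"
    and h: "\<And>y. y \<in> K \<Longrightarrow> (\<lambda>k. f k *v y) \<longlonglongrightarrow> 0"
  shows "(\<lambda>k. f k *v z) \<longlonglongrightarrow> 0"
proof -
  from K obtain u where u: "u \<in> interior K" unfolding proper_cone_def by auto
  have "\<exists>r>0. ball u r \<subseteq> interior K" using open_contains_ball[THEN iffD1, OF open_interior] u by blast
  then obtain r where r0: "r > 0" "ball u r \<subseteq> interior K" by blast
  have r: "r > 0" "ball u r \<subseteq> K" using r0 interior_subset by auto
  define t where "t = r / (2 * (norm z + 1))"
  have nz: "0 \<le> norm z" by simp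
  have d: "0 < 2 * (norm z + 1)" using nz by (smt (verit))
  have t: "t > 0" unfolding t_def using r(1) d by simp
  have "norm (t *\<^sub>R z) < r"
  proof -
    have "norm (t *\<^sub>R z) = t * norm z" using t by simp
    also have "\<dots> = r * (norm z / (2 * (norm z + 1)))" by (simp add: t_def)
    also have "\<dots> < r * 1"
    proof (rule mult_strict_left_mono[OF _ r(1)])
      have "norm z < 2 * (norm z + 1)" using nz by (smt (verit))
      then show "norm z / (2 * (norm z + 1)) < 1" using d by simp
    qed
    finally show ?thesis by simp
  qed
  then have "u + t *\<^sub>R z \<in> ball u r" by (simp add: dist_norm)
  then have "u + t *\<^sub>R z \<in> K" using r(2) by (rule subsetD[rotated])
  moreover have "u \<in> K" using u interior_subset by blast
  ultimately have l: "(\<lambda>k. (1/t) *\<^sub>R (f k *v (u + t *\<^sub>R z) - f k *v u)) \<longlonglongrightarrow> (1/t) *\<^sub>R (0 - 0)"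
    by (intro tendsto_scaleR tendsto_diff h tendsto_const)
  have "(1/t) *\<^sub>R (f k *v (u + t *\<^sub>R z) - f k *v u) = f k *v z" for k
    using t by (simp add: matrix_vector_right_distrib matrix_vector_mult_scaleR)
  with l show ?thesis by simp
qed


lemma e_nonneg: "c * norm x \<le> inner e x \<Longrightarrow> c > 0 \<Longrightarrow> 0 \<le> inner e x"
proof -
  assume a: "c * norm x \<le> inner e x" "c > 0"
  have "0 \<le> c * norm x" using a(2) by simp
  then show ?thesis using a(1) by (rule order.trans)
qed

lemma Kn_apply: "K_nonneg K A \<Longrightarrow> y \<in> K \<Longrightarrow> A *v y \<in> K"
  unfolding K_nonneg_def by auto

lemma lemB:
  fixes C R E M :: "real^'n^'n"
  assumes K: "proper_cone K" and C: "invertible C" "K_nonneg K (matrix_inv C)"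
    and R: "K_nonneg K R" and E: "invertible E" "K_nonneg K E" "K_nonneg K (R - E)"
    and M: "K_nonneg K M" "M = mat 1 - C ** R"
  shows "(\<lambda>k. mpow M k *v z) \<longlonglongrightarrow> 0"
proof (rule span_tendsto[OF K])
  fix y assume y: "y \<in> K"
  obtain e c where ec: "c > 0" "\<forall>x\<in>K. c * norm x \<le> e \<bullet> x" using pos_functional[OF K] by blast
  have CR: "C ** R = mat 1 - M" using M(2) by simp
  have tele: "C ** (\<Sum>k<N. R ** mpow M k) = mat 1 - mpow M N" for N
  proof (induction N)
    case 0 then show ?case by simp
  next
    case (Suc N)
    have "C ** (\<Sum>k<Suc N. R ** mpow M k) = C ** (\<Sum>k<N. R ** mpow M k) + (C ** R) ** mpow M N"
      by (simp add: matrix_add_ldistrib matrix_mul_assoc)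
    also have "\<dots> = mat 1 - mpow M (Suc N)"
      by (simp add: Suc CR mm_rdiff)
    finally show ?case .
  qed
  have Sdef: "(\<Sum>k<N. R ** mpow M k) = matrix_inv C - matrix_inv C ** mpow M N" for N
  proof -
    have "(\<Sum>k<N. R ** mpow M k) = matrix_inv C ** (C ** (\<Sum>k<N. R ** mpow M k))"
      by (simp add: matrix_mul_assoc inv_props[OF C(1)])
    also have "\<dots> = matrix_inv C - matrix_inv C ** mpow M N" by (simp add: tele mm_ldiff)
    finally show ?thesis .
  qed
  define a where "a k = e \<bullet> ((R ** mpow M k) *v y)" for k
  have EMK: "(E ** mpow M k) *v y \<in> K" for k
    using Kn_apply[OF Kn_mult[OF E(2) Kn_mpow[OF M(1)]] y] .
  have RMK: "((R - E) ** mpow M k) *v y \<in> K" for k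
    using Kn_apply[OF Kn_mult[OF E(3) Kn_mpow[OF M(1)]] y] .
  have a_ge: "c * norm ((E ** mpow M k) *v y) \<le> a k" for k
  proof -
    have "(R ** mpow M k) *v y = ((R - E) ** mpow M k) *v y + (E ** mpow M k) *v y"
      by (simp add: mm_rdiff matrix_vector_mult_diff_rdistrib)
    then have "a k = e \<bullet> (((R - E) ** mpow M k) *v y) + e \<bullet> ((E ** mpow M k) *v y)"
      by (simp add: a_def inner_add_right)
    moreover have "0 \<le> e \<bullet> (((R - E) ** mpow M k) *v y)" using e_nonneg ec RMK by blast
    moreover have "c * norm ((E ** mpow M k) *v y) \<le> e \<bullet> ((E ** mpow M k) *v y)" using ec EMK by blast
    ultimately show ?thesis by linarith
  qed
  have a_nn: "0 \<le> a k" for k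
  proof -
    have "0 \<le> c * norm ((E ** mpow M k) *v y)" using ec(1) by simp
    then show ?thesis using a_ge[of k] by (rule order.trans)
  qed
  have a_sum: "sum a {..<N} \<le> e \<bullet> (matrix_inv C *v y)" for N
  proof -
    have "sum a {..<N} = e \<bullet> ((\<Sum>k<N. R ** mpow M k) *v y)"
      by (simp add: a_def mv_sum inner_sum_right)
    also have "\<dots> = e \<bullet> (matrix_inv C *v y) - e \<bullet> ((matrix_inv C ** mpow M N) *v y)"
      by (simp add: Sdef matrix_vector_mult_diff_rdistrib inner_diff_right)
    also have "\<dots> \<le> e \<bullet> (matrix_inv C *v y)"
      using e_nonneg ec Kn_apply[OF Kn_mult[OF C(2) Kn_mpow[OF M(1)]] y] by force
    finally show ?thesis .
  qed
  have "summable a" by (rule summableI_nonneg_bounded[OF a_nn a_sum])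
  then have a0: "a \<longlonglongrightarrow> 0" by (rule summable_LIMSEQ_zero)
  have "(\<lambda>k. norm ((E ** mpow M k) *v y)) \<longlonglongrightarrow> 0"
  proof (rule tendsto_sandwich[of "\<lambda>_. 0" _ _ "\<lambda>k. a k / c"])
    show "\<forall>\<^sub>F n in sequentially. 0 \<le> norm ((E ** mpow M n) *v y)" by simp
    show "\<forall>\<^sub>F n in sequentially. norm ((E ** mpow M n) *v y) \<le> a n / c"
      using a_ge ec(1) by (simp add: field_simps mult.commute)
    show "(\<lambda>n. 0) \<longlonglongrightarrow> (0::real)" by simp
    show "(\<lambda>k. a k / c) \<longlonglongrightarrow> 0" using tendsto_divide_zero[OF a0] .
  qed
  then have "(\<lambda>k. (E ** mpow M k) *v y) \<longlonglongrightarrow> 0" by (simp add: tendsto_norm_zero_iff)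
  then have "(\<lambda>k. matrix_inv E *v ((E ** mpow M k) *v y)) \<longlonglongrightarrow> matrix_inv E *v 0"
    by (intro bounded_linear.tendsto[OF matrix_vector_mul_bounded_linear])
  moreover have "matrix_inv E *v ((E ** mpow M k) *v y) = mpow M k *v y" for k
    by (simp add: matrix_vector_mul_assoc matrix_mul_assoc inv_props[OF E(1)])
  ultimately show "(\<lambda>k. mpow M k *v y) \<longlonglongrightarrow> 0" by simp
qed


definition cm :: "(nat \<Rightarrow> 'n) \<Rightarrow> real^'n^'n \<Rightarrow> complex Matrix.mat" where
  "cm h B = Matrix.mat CARD('n) CARD('n) (\<lambda>(i,j). complex_of_real (vec_nth (vec_nth B (h i)) (h j)))"

lemma cm_dim[simp]: "dim_row (cm h B) = CARD('n)" "dim_col (cm h B) = CARD('n)"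
  "cm h (B::real^'n^'n) \<in> carrier_mat CARD('n) CARD('n)"
  unfolding cm_def by auto

lemma cm_index: "i < CARD('n) \<Longrightarrow> j < CARD('n) \<Longrightarrow>
   index_mat (cm h (B::real^'n^'n)) (i,j) = complex_of_real (vec_nth (vec_nth B (h i)) (h j))"
  unfolding cm_def by simp

lemma reindex:
  assumes h: "bij_betw h {0..<CARD('n)} (UNIV::'n set)"
  shows "(\<Sum>l\<in>{0..<CARD('n)}. g (h l)) = (\<Sum>j\<in>UNIV. (g j :: 'a::comm_monoid_add))"
  using sum.reindex_bij_betw[OF h, of g] .

lemma h_surj:
  assumes h: "bij_betw h {0..<CARD('n)} (UNIV::'n set)"
  obtains i where "i < CARD('n)" "h i = j"
proof -
  have "j \<in> h ` {0..<CARD('n)}" using h unfolding bij_betw_def by auto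
  then obtain i where "i \<in> {0..<CARD('n)}" "j = h i" by blast
  then show ?thesis using that by auto
qed

lemma cm_mult:
  assumes h: "bij_betw h {0..<CARD('n)} (UNIV::'n set)"
  shows "cm h ((B::real^'n^'n) ** C) = cm h B * cm h C"
proof (rule eq_matI)
  fix i j assume i: "i < dim_row (cm h B * cm h C)" and j: "j < dim_col (cm h B * cm h C)"
  then have i': "i < CARD('n)" and j': "j < CARD('n)" by auto
  have "index_mat (cm h B * cm h C) (i,j) = scalar_prod (Matrix.row (cm h B) i) (col (cm h C) j)"
    using i' j' by simp
  also have "\<dots> = (\<Sum>l\<in>{0..<CARD('n)}. complex_of_real (vec_nth (vec_nth B (h i)) (h l) * vec_nth (vec_nth C (h l)) (h j)))"
    unfolding scalar_prod_def using i' j' by (simp add: cm_index)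
  also have "\<dots> = (\<Sum>k\<in>UNIV. complex_of_real (vec_nth (vec_nth B (h i)) k * vec_nth (vec_nth C k) (h j)))"
    by (rule reindex[OF h])
  also have "\<dots> = index_mat (cm h (B ** C)) (i,j)"
    using i' j' by (simp add: cm_index matrix_matrix_mult_def)
  finally show "index_mat (cm h (B ** C)) (i,j) = index_mat (cm h B * cm h C) (i,j)" by simp
qed auto

lemma cm_one:
  assumes h: "bij_betw h {0..<CARD('n)} (UNIV::'n set)"
  shows "cm h (mat 1 :: real^'n^'n) = 1\<^sub>m CARD('n)"
proof (rule eq_matI)
  fix i j assume "i < dim_row (1\<^sub>m CARD('n) :: complex Matrix.mat)" "j < dim_col (1\<^sub>m CARD('n) :: complex Matrix.mat)"
  then have i: "i < CARD('n)" and j: "j < CARD('n)" by auto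
  have "h i = h j \<longleftrightarrow> i = j" using h i j unfolding bij_betw_def inj_on_def by auto
  then show "index_mat (cm h (mat 1 :: real^'n^'n)) (i,j) = index_mat (1\<^sub>m CARD('n)) (i,j)"
    using i j by (simp add: cm_index Finite_Cartesian_Product.mat_def)
qed auto

lemma cm_pow:
  assumes h: "bij_betw h {0..<CARD('n)} (UNIV::'n set)"
  shows "cm h (mpow (B::real^'n^'n) k) = cm h B ^\<^sub>m k"
proof (induction k)
  case 0 then show ?case by (simp add: cm_one[OF h])
next
  case (Suc k)
  have "mpow B (Suc k) = mpow B k ** B" using mpow_comm[of B k] by simp
  then show ?case by (simp add: cm_mult[OF h] Suc)
qed


definition ev_set :: "real^'n^'n \<Rightarrow> complex set" where
  "ev_set B = {l. \<exists>v::complex^'n. v \<noteq> 0 \<and> cmat B *v v = l *s v}"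

lemma cmat_mv_nth: "vec_nth (cmat B *v v) j = (\<Sum>k\<in>UNIV. complex_of_real (vec_nth (vec_nth B j) k) * vec_nth v k)"
  by (simp add: cmat_def matrix_vector_mult_def)

lemma ev_corr:
  assumes h: "bij_betw h {0..<CARD('n)} (UNIV::'n set)"
  shows "l \<in> ev_set (B::real^'n^'n) \<longleftrightarrow> eigenvalue (cm h B) l"
proof
  assume "l \<in> ev_set B"
  then obtain v :: "complex^'n" where v: "v \<noteq> 0" "cmat B *v v = l *s v" unfolding ev_set_def by auto
  define w where "w = Matrix.vec CARD('n) (\<lambda>i. vec_nth v (h i))"
  have wc: "w \<in> carrier_vec (dim_row (cm h B))" unfolding w_def by simp
  obtain j where j: "vec_nth v j \<noteq> 0" using v(1) by (auto simp: Finite_Cartesian_Product.vec_eq_iff)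
  obtain i where i: "i < CARD('n)" "h i = j" using h_surj[OF h] by blast
  have wnz: "w \<noteq> 0\<^sub>v (dim_row (cm h B))"
  proof
    assume "w = 0\<^sub>v (dim_row (cm h B))"
    then have "vec_index w i = 0" using i by simp
    then show False using i j by (simp add: w_def)
  qed
  have "cm h B *\<^sub>v w = l \<cdot>\<^sub>v w"
  proof (rule eq_vecI)
    fix i assume "i < dim_vec (l \<cdot>\<^sub>v w)"
    then have i: "i < CARD('n)" by (simp add: w_def)
    have "vec_index (cm h B *\<^sub>v w) i = (\<Sum>m\<in>{0..<CARD('n)}. complex_of_real (vec_nth (vec_nth B (h i)) (h m)) * vec_nth v (h m))"
      using i by (simp add: scalar_prod_def cm_index w_def)
    also have "\<dots> = (\<Sum>k\<in>UNIV. complex_of_real (vec_nth (vec_nth B (h i)) k) * vec_nth v k)"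
      by (rule reindex[OF h])
    also have "\<dots> = vec_nth (cmat B *v v) (h i)" by (simp add: cmat_mv_nth)
    also have "\<dots> = l * vec_nth v (h i)" using v(2) by simp
    also have "\<dots> = vec_index (l \<cdot>\<^sub>v w) i" using i by (simp add: w_def)
    finally show "vec_index (cm h B *\<^sub>v w) i = vec_index (l \<cdot>\<^sub>v w) i" .
  qed (simp add: w_def)
  then show "eigenvalue (cm h B) l" unfolding eigenvalue_def eigenvector_def using wc wnz by blast
next
  assume "eigenvalue (cm h B) l"
  then obtain w where w: "w \<in> carrier_vec CARD('n)" "w \<noteq> 0\<^sub>v CARD('n)" "cm h B *\<^sub>v w = l \<cdot>\<^sub>v w"
    unfolding eigenvalue_def eigenvector_def by auto
  define g where "g = inv_into {0..<CARD('n)} h"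
  have gh: "i < CARD('n) \<Longrightarrow> g (h i) = i" for i
    using h unfolding g_def bij_betw_def by (simp add: inv_into_f_f)
  have hg: "h (g j) = j" "g j < CARD('n)" for j
  proof -
    have jj: "j \<in> h ` {0..<CARD('n)}" using h unfolding bij_betw_def by auto
    show "h (g j) = j" unfolding g_def using jj by (rule f_inv_into_f)
    have "g j \<in> {0..<CARD('n)}" unfolding g_def using jj by (rule inv_into_into)
    then show "g j < CARD('n)" by simp
  qed
  define v :: "complex^'n" where "v = (\<chi> j. vec_index w (g j))"
  have dw: "dim_vec w = CARD('n)" using w(1) by simp
  have "\<exists>i<CARD('n). vec_index w i \<noteq> 0"
  proof (rule ccontr)
    assume "\<not> (\<exists>i<CARD('n). vec_index w i \<noteq> 0)"
    then have "w = 0\<^sub>v CARD('n)" using dw by (intro eq_vecI) auto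
    with w(2) show False by simp
  qed
  then obtain i where i: "i < CARD('n)" "vec_index w i \<noteq> 0" by blast
  have "v \<noteq> 0"
  proof
    assume "v = 0"
    then have "vec_nth v (h i) = 0" by simp
    then show False using i gh by (simp add: v_def)
  qed
  moreover have "cmat B *v v = l *s v"
  proof (subst Finite_Cartesian_Product.vec_eq_iff, intro allI)
    fix j
    define i where "i = g j"
    have i: "i < CARD('n)" "h i = j" using hg unfolding i_def by auto
    have "vec_nth (cmat B *v v) j = (\<Sum>k\<in>UNIV. complex_of_real (vec_nth (vec_nth B (h i)) k) * vec_index w (g k))"
      by (simp add: cmat_mv_nth v_def i)
    also have "\<dots> = (\<Sum>m\<in>{0..<CARD('n)}. complex_of_real (vec_nth (vec_nth B (h i)) (h m)) * vec_index w (g (h m)))"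
      by (rule reindex[OF h, symmetric])
    also have "\<dots> = (\<Sum>m\<in>{0..<CARD('n)}. complex_of_real (vec_nth (vec_nth B (h i)) (h m)) * vec_index w m)"
      by (rule sum.cong) (auto simp: gh)
    also have "\<dots> = vec_index (cm h B *\<^sub>v w) i"
      using i dw by (simp add: scalar_prod_def cm_index)
    also have "\<dots> = l * vec_index w i" using w(3) i dw by simp
    also have "\<dots> = vec_nth (l *s v) j" using i by (simp add: v_def i_def)
    finally show "vec_nth (cmat B *v v) j = vec_nth (l *s v) j" .
  qed
  ultimately show "l \<in> ev_set B" unfolding ev_set_def by auto
qed

lemma ex_bij: "\<exists>h. bij_betw h {0..<CARD('n)} (UNIV::'n::finite set)"
  using ex_bij_betw_nat_finite[of "UNIV::'n set"] by auto

lemma ev_set_fin: "finite (ev_set (B::real^'n^'n))" "ev_set B \<noteq> {}"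
proof -
  obtain h where h: "bij_betw h {0..<CARD('n)} (UNIV::'n set)" using ex_bij by blast
  have eq: "ev_set B = Spectral_Radius.spectrum (cm h B)"
    unfolding Spectral_Radius.spectrum_def using ev_corr[OF h] by auto
  show "finite (ev_set B)" unfolding eq using card_finite_spectrum(1)[OF cm_dim(3)] .
  show "ev_set B \<noteq> {}" unfolding eq using spectrum_non_empty[OF cm_dim(3)] by simp
qed

lemma sr_ev: "spectral_radius B = Max (cmod ` ev_set B)"
  unfolding Defs.spectral_radius_def ev_set_def by (simp add: setcompr_eq_image)


lemma sr_nonneg: "0 \<le> spectral_radius (B::real^'n^'n)"
proof -
  obtain l where l: "l \<in> ev_set B" using ev_set_fin(2) by blast
  have "cmod l \<le> Max (cmod ` ev_set B)" using ev_set_fin(1) l by (intro Max_ge) auto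
  then show ?thesis unfolding sr_ev using norm_ge_zero order.trans by blast
qed

lemma sr_ge: "l \<in> ev_set (B::real^'n^'n) \<Longrightarrow> cmod l \<le> spectral_radius B"
  unfolding sr_ev using ev_set_fin(1) by (intro Max_ge) auto

lemma sr_less: "(\<And>l. l \<in> ev_set (B::real^'n^'n) \<Longrightarrow> cmod l < a) \<Longrightarrow> spectral_radius B < a"
  unfolding sr_ev using ev_set_fin by (subst Max_less_iff) auto

lemma cmat_scale_mv: "cmat (c *\<^sub>R B) *v v = complex_of_real c *s (cmat (B::real^'n^'n) *v v)"
  by (simp add: Finite_Cartesian_Product.vec_eq_iff cmat_mv_nth sum_distrib_left mult_ac)

lemma mpow_scale: "mpow (c *\<^sub>R B) k = (c ^ k) *\<^sub>R mpow (B::real^'n^'n) k"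
proof (induction k)
  case 0 then show ?case by simp
next
  case (Suc k)
  then show ?case by (simp add: matrix_scalar_ac scalar_matrix_assoc[symmetric])
qed

lemma pow_bound:
  fixes B :: "real^'n^'n"
  assumes sr: "spectral_radius B < \<beta>"
  shows "\<exists>c. \<forall>k a b. \<bar>vec_nth (vec_nth (mpow B k) a) b\<bar> \<le> c * \<beta> ^ k"
proof -
  obtain h where h: "bij_betw h {0..<CARD('n)} (UNIV::'n set)" using ex_bij by blast
  have bpos: "\<beta> > 0" using sr sr_nonneg[of B] by linarith
  define X where "X = (1/\<beta>) *\<^sub>R B"
  have evX: "cmod l < 1" if l: "l \<in> Spectral_Radius.spectrum (cm h X)" for l
  proof -
    from l have "l \<in> ev_set X" using ev_corr[OF h] unfolding Spectral_Radius.spectrum_def by auto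
    then obtain v :: "complex^'n" where v: "v \<noteq> 0" "cmat X *v v = l *s v" unfolding ev_set_def by auto
    have "cmat B *v v = complex_of_real \<beta> *s (cmat X *v v)"
      using bpos by (simp add: X_def cmat_scale_mv)
    also have "\<dots> = (complex_of_real \<beta> * l) *s v" by (simp add: v(2))
    finally have "complex_of_real \<beta> * l \<in> ev_set B" using v(1) unfolding ev_set_def by auto
    have "cmod (complex_of_real \<beta> * l) = \<beta> * cmod l" using bpos by (simp add: norm_mult)
    with sr_ge[OF \<open>complex_of_real \<beta> * l \<in> ev_set B\<close>] sr have "\<beta> * cmod l < \<beta>" by simp
    then show ?thesis using bpos by simp
  qed
  have "Spectral_Radius.spectral_radius (cm h X) < 1"
    unfolding Spectral_Radius.spectral_radius_def
    using card_finite_spectrum(1)[OF cm_dim(3)] spectrum_non_empty[OF cm_dim(3)] evX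
    by (subst Max_less_iff) auto
  from spectral_radius_jnf_norm_bound_less_1_upper_triangular[OF cm_dim(3) this]
  obtain c where c: "\<And>k. norm_bound (cm h X ^\<^sub>m k) c" by blast
  have "\<bar>vec_nth (vec_nth (mpow B k) a) b\<bar> \<le> c * \<beta> ^ k" for k a b
  proof -
    obtain i where i: "i < CARD('n)" "h i = a" using h_surj[OF h] by blast
    obtain j where j: "j < CARD('n)" "h j = b" using h_surj[OF h] by blast
    have "norm (index_mat (cm h X ^\<^sub>m k) (i,j)) \<le> c"
      using c[of k] i j unfolding norm_bound_def by (simp add: cm_pow[OF h, symmetric])
    then have "\<bar>vec_nth (vec_nth (mpow X k) a) b\<bar> \<le> c"
      using i j by (simp add: cm_pow[OF h, symmetric] cm_index)
    then have "\<bar>(1/\<beta>)^k * vec_nth (vec_nth (mpow B k) a) b\<bar> \<le> c"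
      by (simp add: X_def mpow_scale)
    then have "(1/\<beta>)^k * \<bar>vec_nth (vec_nth (mpow B k) a) b\<bar> \<le> c"
      using bpos by (simp add: abs_mult)
    then show ?thesis using bpos by (simp add: field_simps)
  qed
  then show ?thesis by blast
qed

lemma F1:
  fixes B :: "real^'n^'n"
  assumes sr: "spectral_radius B < \<alpha>"
  shows "(\<lambda>k. (1/\<alpha>^k) *\<^sub>R (mpow B k *v z)) \<longlonglongrightarrow> 0"
proof -
  define \<beta> where "\<beta> = (spectral_radius B + \<alpha>) / 2"
  have b: "spectral_radius B < \<beta>" "\<beta> < \<alpha>" "0 < \<beta>" using sr sr_nonneg[of B] by (auto simp: \<beta>_def)
  obtain c where c: "\<And>k a b. \<bar>vec_nth (vec_nth (mpow B k) a) b\<bar> \<le> c * \<beta> ^ k" using pow_bound[OF b(1)] by blast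
  define Z where "Z = (\<Sum>b\<in>UNIV. \<bar>vec_nth z b\<bar>)"
  have comp: "\<bar>vec_nth (mpow B k *v z) a\<bar> \<le> c * \<beta>^k * Z" for k a
  proof -
    have "\<bar>vec_nth (mpow B k *v z) a\<bar> = \<bar>\<Sum>b\<in>UNIV. vec_nth (vec_nth (mpow B k) a) b * vec_nth z b\<bar>"
      by (simp add: matrix_vector_mult_def)
    also have "\<dots> \<le> (\<Sum>b\<in>UNIV. \<bar>vec_nth (vec_nth (mpow B k) a) b\<bar> * \<bar>vec_nth z b\<bar>)"
      by (rule order.trans[OF sum_abs]) (simp add: abs_mult)
    also have "\<dots> \<le> (\<Sum>b\<in>UNIV. c * \<beta>^k * \<bar>vec_nth z b\<bar>)"
      by (intro sum_mono mult_right_mono c) auto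
    also have "\<dots> = c * \<beta>^k * Z" by (simp add: Z_def sum_distrib_left)
    finally show ?thesis .
  qed
  have nb: "norm ((1/\<alpha>^k) *\<^sub>R (mpow B k *v z)) \<le> (CARD('n) * c * Z) * (\<beta>/\<alpha>)^k" for k
  proof -
    have "norm (mpow B k *v z) \<le> (\<Sum>a\<in>UNIV. \<bar>vec_nth (mpow B k *v z) a\<bar>)" by (rule norm_le_l1_cart)
    also have "\<dots> \<le> (\<Sum>a\<in>(UNIV::'n set). c * \<beta>^k * Z)" by (intro sum_mono comp)
    also have "\<dots> = CARD('n) * c * Z * \<beta>^k" by simp
    finally have "norm (mpow B k *v z) \<le> CARD('n) * c * Z * \<beta>^k" .
    then have "(1/\<alpha>^k) * norm (mpow B k *v z) \<le> (1/\<alpha>^k) * (CARD('n) * c * Z * \<beta>^k)"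
      using b by (intro mult_left_mono) auto
    then show ?thesis using b by (simp add: power_divide field_simps)
  qed
  have ba: "norm (\<beta>/\<alpha>) < 1" using b by simp
  have "(\<lambda>k. (CARD('n) * c * Z) * (\<beta>/\<alpha>)^k) \<longlonglongrightarrow> (CARD('n) * c * Z) * 0"
    by (rule tendsto_mult[OF tendsto_const LIMSEQ_power_zero[OF ba]])
  then have lim: "(\<lambda>k. (CARD('n) * c * Z) * (\<beta>/\<alpha>)^k) \<longlonglongrightarrow> 0" by simp
  have nb': "\<forall>k. norm ((1/\<alpha>^k) *\<^sub>R (mpow B k *v z)) \<le> (CARD('n) * c * Z) * (\<beta>/\<alpha>)^k"
    using nb by blast
  show ?thesis by (rule Lim_null_comparison[OF always_eventually[OF nb'] lim])
qed

lemma cmat_mult: "cmat ((B::real^'n^'n) ** C) = cmat B ** cmat C"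
  by (simp add: Finite_Cartesian_Product.vec_eq_iff cmat_def matrix_matrix_mult_def)

lemma mv_scale_comm: "(A::complex^'n^'n) *v (c *s x) = c *s (A *v x)"
  by (simp add: Finite_Cartesian_Product.vec_eq_iff matrix_vector_mult_def sum_distrib_left mult_ac)

lemma cmat_pow_ev:
  assumes "cmat (B::real^'n^'n) *v v = l *s v"
  shows "cmat (mpow B k) *v v = l ^ k *s v"
proof (induction k)
  case 0
  have "cmat (mat 1 :: real^'n^'n) = mat 1" by (simp add: Finite_Cartesian_Product.vec_eq_iff cmat_def Finite_Cartesian_Product.mat_def)
  then show ?case by simp
next
  case (Suc k)
  have "cmat (mpow B (Suc k)) *v v = cmat B *v (cmat (mpow B k) *v v)"
    by (simp add: cmat_mult matrix_vector_mul_assoc)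
  also have "\<dots> = l ^ Suc k *s v" by (simp add: Suc mv_scale_comm assms mult_ac)
  finally show ?case .
qed

lemma cmat_comp:
  "vec_nth (cmat M *v v) j = Complex (vec_nth (M *v (\<chi> i. Re (vec_nth v i))) j) (vec_nth (M *v (\<chi> i. Im (vec_nth v i))) j)"
  by (simp add: complex_eq_iff cmat_def matrix_vector_mult_def Re_sum Im_sum)

lemma F2:
  fixes B :: "real^'n^'n"
  assumes a: "\<alpha> > 0" and lim: "\<And>z. (\<lambda>k. (1/\<alpha>^k) *\<^sub>R (mpow B k *v z)) \<longlonglongrightarrow> 0"
  shows "spectral_radius B < \<alpha>"
proof (rule sr_less)
  fix l assume "l \<in> ev_set B"
  then obtain v :: "complex^'n" where v: "v \<noteq> 0" "cmat B *v v = l *s v" unfolding ev_set_def by auto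
  obtain j where j: "vec_nth v j \<noteq> 0" using v(1) by (auto simp: Finite_Cartesian_Product.vec_eq_iff)
  define re where "re = (\<chi> i. Re (vec_nth v i))"
  define im where "im = (\<chi> i. Im (vec_nth v i))"
  have eq: "(l / complex_of_real \<alpha>) ^ k * vec_nth v j =
      Complex (vec_nth ((1/\<alpha>^k) *\<^sub>R (mpow B k *v re)) j) (vec_nth ((1/\<alpha>^k) *\<^sub>R (mpow B k *v im)) j)" for k
  proof -
    have "l ^ k * vec_nth v j = Complex (vec_nth (mpow B k *v re) j) (vec_nth (mpow B k *v im) j)"
      using cmat_comp[of "mpow B k" v j] cmat_pow_ev[OF v(2), of k] by (simp add: re_def im_def)
    then have "(l / complex_of_real \<alpha>) ^ k * vec_nth v j = (Complex (vec_nth (mpow B k *v re) j) (vec_nth (mpow B k *v im) j)) / complex_of_real (\<alpha> ^ k)"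
      by (simp add: power_divide)
    also have "\<dots> = Complex (vec_nth ((1/\<alpha>^k) *\<^sub>R (mpow B k *v re)) j) (vec_nth ((1/\<alpha>^k) *\<^sub>R (mpow B k *v im)) j)"
      by (simp add: complex_eq_iff)
    finally show ?thesis .
  qed
  have "(\<lambda>k. Complex (vec_nth ((1/\<alpha>^k) *\<^sub>R (mpow B k *v re)) j) (vec_nth ((1/\<alpha>^k) *\<^sub>R (mpow B k *v im)) j)) \<longlonglongrightarrow> Complex (vec_nth 0 j) (vec_nth 0 j)"
    by (intro tendsto_Complex tendsto_vec_nth lim)
  then have "(\<lambda>k. (l / complex_of_real \<alpha>) ^ k * vec_nth v j) \<longlonglongrightarrow> 0"
    by (simp add: eq Complex_eq)
  then have lim0: "(\<lambda>k. cmod ((l / complex_of_real \<alpha>) ^ k * vec_nth v j)) \<longlonglongrightarrow> 0"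
    by (simp add: tendsto_norm_zero_iff)
  show "cmod l < \<alpha>"
  proof (rule ccontr)
    assume "\<not> cmod l < \<alpha>"
    then have ge: "1 \<le> cmod l / \<alpha>" using a by simp
    have "cmod (vec_nth v j) \<le> cmod ((l / complex_of_real \<alpha>) ^ k * vec_nth v j)" for k
    proof -
      have one: "1 \<le> (cmod l / \<alpha>) ^ k" using ge by (simp add: one_le_power)
      have "cmod (vec_nth v j) \<le> (cmod l / \<alpha>) ^ k * cmod (vec_nth v j)"
        using mult_right_mono[OF one norm_ge_zero[of "vec_nth v j"]] by simp
      also have "\<dots> = cmod ((l / complex_of_real \<alpha>) ^ k * vec_nth v j)"
        using a by (simp add: norm_mult norm_power norm_divide)
      finally show ?thesis .
    qed
    then have "cmod (vec_nth v j) \<le> 0"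
      by (intro LIMSEQ_le_const[OF lim0]) auto
    then show False using j by simp
  qed
qed


lemma scale_mv: "(c *\<^sub>R (M::real^'n^'n)) *v y = c *\<^sub>R (M *v y)"
  by (simp add: Finite_Cartesian_Product.vec_eq_iff matrix_vector_mult_def sum_distrib_left mult_ac)

lemma split_id:
  fixes U F G :: "real^'n^'n"
  assumes F: "invertible F" and UFG: "U = F - G"
  shows "(\<Sum>j<s. mpow (matrix_inv F ** G) j ** matrix_inv F) = (\<Sum>j<s. matrix_inv F ** mpow (G ** matrix_inv F) j)"
    and "U ** matrix_inv F = mat 1 - G ** matrix_inv F"
    and "(\<Sum>j<s. mpow (matrix_inv F ** G) j ** matrix_inv F) ** U = mat 1 - mpow (matrix_inv F ** G) s"
    and "U ** (\<Sum>j<s. mpow (matrix_inv F ** G) j ** matrix_inv F) = mat 1 - mpow (G ** matrix_inv F) s"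
proof -
  define Fi where "Fi = matrix_inv F"
  define H where "H = Fi ** G"
  define W where "W = G ** Fi"
  have c: "H ** Fi = Fi ** W" by (simp add: H_def W_def matrix_mul_assoc)
  have conj: "mpow H j ** Fi = Fi ** mpow W j" for j by (rule mpow_conj[OF c])
  show s1: "(\<Sum>j<s. mpow (matrix_inv F ** G) j ** matrix_inv F) = (\<Sum>j<s. matrix_inv F ** mpow (G ** matrix_inv F) j)"
    using conj by (simp add: H_def W_def Fi_def)
  have UFi: "U ** Fi = mat 1 - W" by (simp add: UFG mm_rdiff Fi_def W_def inv_props[OF F])
  then show "U ** matrix_inv F = mat 1 - G ** matrix_inv F" by (simp add: Fi_def W_def)
  have FiU: "Fi ** U = mat 1 - H" by (simp add: UFG mm_ldiff Fi_def H_def inv_props[OF F])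
  have "(\<Sum>j<s. mpow H j ** Fi) ** U = mat 1 - mpow H s"
  proof (induction s)
    case 0 then show ?case by simp
  next
    case (Suc s)
    have "(\<Sum>j<Suc s. mpow H j ** Fi) ** U = (\<Sum>j<s. mpow H j ** Fi) ** U + mpow H s ** (Fi ** U)"
      by (simp add: mm_radd matrix_mul_assoc)
    also have "\<dots> = mat 1 - mpow H (Suc s)"
      using mpow_comm[of H s] by (simp add: Suc FiU mm_ldiff)
    finally show ?case .
  qed
  then show "(\<Sum>j<s. mpow (matrix_inv F ** G) j ** matrix_inv F) ** U = mat 1 - mpow (matrix_inv F ** G) s"
    by (simp add: H_def Fi_def)
  have "U ** (\<Sum>j<s. Fi ** mpow W j) = mat 1 - mpow W s"
  proof (induction s)
    case 0 then show ?case by simp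
  next
    case (Suc s)
    have "U ** (\<Sum>j<Suc s. Fi ** mpow W j) = U ** (\<Sum>j<s. Fi ** mpow W j) + (U ** Fi) ** mpow W s"
      by (simp add: matrix_add_ldistrib matrix_mul_assoc)
    also have "\<dots> = mat 1 - mpow W (Suc s)"
      by (simp add: Suc UFi mm_rdiff)
    finally show ?case .
  qed
  then show "U ** (\<Sum>j<s. mpow (matrix_inv F ** G) j ** matrix_inv F) = mat 1 - mpow (G ** matrix_inv F) s"
    using s1 by (simp add: W_def Fi_def)
qed


lemma Kn_zero: "proper_cone K \<Longrightarrow> K_nonneg K 0"
  unfolding K_nonneg_def by (simp add: pc_0)

lemma inv_from_ker:
  fixes X :: "real^'n^'n"
  assumes "\<And>x. X *v x = 0 \<Longrightarrow> x = 0"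
  shows "invertible X"
  using assms by (simp add: invertible_left_inverse matrix_left_invertible_ker)

theorem theorem3p9:
  fixes K :: "(real ^ 'n) set"
    and A U V F G Fb Gb :: "real ^ 'n ^ 'n"
    and s :: nat
  assumes "proper_cone K"
    and "K_monotone K A"
    and "K_regular_splitting K A U V"
    and "K_weak_regular_splitting_II K U F G"
    and "K_weak_regular_splitting_II K U Fb Gb"
    and "V ** matrix_inv F ** G = G ** matrix_inv F ** V"
    and "V ** matrix_inv Fb ** Gb = Gb ** matrix_inv Fb ** V"
    and "s \<ge> 1"
    and "K_ge K G (G ** matrix_inv F ** G)"
    and "K_ge K (Gb ** matrix_inv Fb) (G ** matrix_inv F)"
  shows "spectral_radius
           (mpow (matrix_inv F ** G) s +
            (\<Sum>j<s. mpow (matrix_inv F ** G) j ** matrix_inv F ** V))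
         \<le> spectral_radius
           (mpow (matrix_inv Fb ** Gb) s +
            (\<Sum>j<s. mpow (matrix_inv Fb ** Gb) j ** matrix_inv Fb ** V))
       \<and> spectral_radius
           (mpow (matrix_inv Fb ** Gb) s +
            (\<Sum>j<s. mpow (matrix_inv Fb ** Gb) j ** matrix_inv Fb ** V)) < 1"
proof -
  note K = assms(1)
  have Ainv: "invertible A" "K_nonneg K (matrix_inv A)" using assms(2) unfolding K_monotone_def by auto
  have AUV: "A = U - V" and Uinv: "invertible U" "K_nonneg K (matrix_inv U)" and KV: "K_nonneg K V"
    using assms(3) unfolding K_regular_splitting_def by auto
  have UF: "U = F - G" "invertible F" "K_nonneg K (matrix_inv F)" "K_nonneg K (G ** matrix_inv F)"
    using assms(4) unfolding K_weak_regular_splitting_II_def by auto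
  have UFb: "U = Fb - Gb" "invertible Fb" "K_nonneg K (matrix_inv Fb)" "K_nonneg K (Gb ** matrix_inv Fb)"
    using assms(5) unfolding K_weak_regular_splitting_II_def by auto
  define Fi where "Fi = matrix_inv F"
  define Fbi where "Fbi = matrix_inv Fb"
  define Ai where "Ai = matrix_inv A"
  define Ui where "Ui = matrix_inv U"
  define H where "H = Fi ** G"
  define W where "W = G ** Fi"
  define Hb where "Hb = Fbi ** Gb"
  define Wb where "Wb = Gb ** Fbi"
  define R where "R = (\<Sum>j<s. mpow H j ** Fi)"
  define Rb where "Rb = (\<Sum>j<s. mpow Hb j ** Fbi)"
  define T where "T = mpow H s + (\<Sum>j<s. mpow H j ** Fi ** V)"
  define Tb where "Tb = mpow Hb s + (\<Sum>j<s. mpow Hb j ** Fbi ** V)"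
  define Mb where "Mb = mat 1 - A ** Rb"
  note sid = split_id(1)[OF UF(2,1), of s, folded Fi_def, folded H_def W_def, folded R_def]
    split_id(2)[OF UF(2,1), folded Fi_def, folded H_def W_def]
    split_id(3)[OF UF(2,1), of s, folded Fi_def, folded H_def W_def, folded R_def]
    split_id(4)[OF UF(2,1), of s, folded Fi_def, folded H_def W_def, folded R_def]
  note sidb = split_id(1)[OF UFb(2,1), of s, folded Fbi_def, folded Hb_def Wb_def, folded Rb_def]
    split_id(2)[OF UFb(2,1), folded Fbi_def, folded Hb_def Wb_def]
    split_id(3)[OF UFb(2,1), of s, folded Fbi_def, folded Hb_def Wb_def, folded Rb_def]
    split_id(4)[OF UFb(2,1), of s, folded Fbi_def, folded Hb_def Wb_def, folded Rb_def]
  have KFi: "K_nonneg K Fi" "K_nonneg K W" using UF by (auto simp: Fi_def W_def)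
  have KFbi: "K_nonneg K Fbi" "K_nonneg K Wb" using UFb by (auto simp: Fbi_def Wb_def)
  have KWd: "K_nonneg K (Wb - W)" using assms(10) by (simp add: K_ge_def Wb_def W_def Fi_def Fbi_def)
  have UH: "U ** H = G - G ** Fi ** G"
    by (simp add: H_def matrix_mul_assoc sid(2) mm_rdiff W_def)
  have KH: "K_nonneg K H"
  proof -
    have "H = Ui ** (U ** H)" by (simp add: Ui_def matrix_mul_assoc inv_props[OF Uinv(1)])
    moreover have "K_nonneg K (U ** H)" using assms(9) by (simp add: UH K_ge_def Fi_def)
    ultimately show ?thesis using Kn_mult[OF Uinv(2)[folded Ui_def], of "U ** H"] by simp
  qed
  have sumV: "(\<Sum>j<s. mpow H j ** Fi ** V) = R ** V" by (simp add: R_def mm_rsum)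
  have sumVb: "(\<Sum>j<s. mpow Hb j ** Fbi ** V) = Rb ** V" by (simp add: Rb_def mm_rsum)
  have Teq: "T = mat 1 - R ** A"
    by (simp add: T_def sumV AUV mm_ldiff sid(3))
  have Tbeq: "Tb = mat 1 - Rb ** A"
    by (simp add: Tb_def sumVb AUV mm_ldiff sidb(3))
  have KT: "K_nonneg K T"
    unfolding T_def
    by (intro Kn_add[OF K] Kn_mpow[OF KH] Kn_sum[OF K] Kn_mult KV KFi)
  have KRb: "K_nonneg K Rb"
    unfolding sidb(1) by (intro Kn_sum[OF K] Kn_mult Kn_mpow KFbi)
  have Mbeq: "Mb = mpow Wb s + V ** Rb"
    by (simp add: Mb_def AUV mm_rdiff sidb(4))
  have KMb: "K_nonneg K Mb"
    unfolding Mbeq by (intro Kn_add[OF K] Kn_mpow Kn_mult KFbi KRb KV)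
  have KD: "K_nonneg K (R - Rb)"
  proof -
    have "R - Rb = Ui ** (U ** (R - Rb))" by (simp add: Ui_def matrix_mul_assoc inv_props[OF Uinv(1)])
    also have "\<dots> = Ui ** (mpow Wb s - mpow W s)" by (simp add: mm_ldiff sid(4) sidb(4))
    finally show ?thesis using Kn_mult[OF Uinv(2)[folded Ui_def] Kn_pow_diff[OF K KFi(2) KWd]] by simp
  qed
  obtain s' where s': "s = Suc s'" using assms(8) by (cases s) auto
  have KRbF: "K_nonneg K (Rb - Fbi)"
  proof -
    have "Rb = (\<Sum>j<Suc s'. Fbi ** mpow Wb j)" using sidb(1) s' by (simp add: Rb_def)
    also have "\<dots> = Fbi ** mpow Wb 0 + (\<Sum>j<s'. Fbi ** mpow Wb (Suc j))" by (rule sum.lessThan_Suc_shift)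
    also have "\<dots> = Fbi + (\<Sum>j<s'. Fbi ** mpow Wb (Suc j))" by simp
    finally have "Rb - Fbi = (\<Sum>j<s'. Fbi ** mpow Wb (Suc j))" by simp
    moreover have "K_nonneg K (\<Sum>j<s'. Fbi ** mpow Wb (Suc j))"
      by (intro Kn_sum[OF K] Kn_mult Kn_mpow KFbi)
    ultimately show ?thesis by simp
  qed
  have Fbinv: "invertible Fbi"
    unfolding invertible_def Fbi_def using inv_props[OF UFb(2)] by blast
  have Wb0: "(\<lambda>k. mpow Wb k *v z) \<longlonglongrightarrow> 0" for z
  proof -
    have e: "Wb = mat 1 - U ** matrix_inv Fb" using sidb(2) by (simp add: Fbi_def)
    have z: "K_nonneg K (matrix_inv Fb - matrix_inv Fb)" by (simp add: Kn_zero[OF K])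
    show ?thesis by (rule lemB[OF K Uinv UFb(3) Fbinv[unfolded Fbi_def] UFb(3) z KFbi(2) e])
  qed
  have inv1: "invertible (mat 1 - mpow Wb s)"
  proof (rule inv_from_ker)
    fix x assume "(mat 1 - mpow Wb s) *v x = 0"
    then have fx: "mpow Wb s *v x = x" by (simp add: matrix_vector_mult_diff_rdistrib)
    have "mpow Wb (s * k) *v x = x" for k
    proof (induction k)
      case 0 then show ?case by simp
    next
      case (Suc k)
      have "mpow Wb (s * Suc k) = mpow Wb s ** mpow Wb (s * k)" by (simp add: mpow_add[symmetric])
      then show ?case by (simp add: matrix_vector_mul_assoc[symmetric] Suc fx)
    qed
    moreover have "strict_mono (\<lambda>k. s * k)" using assms(8) by (simp add: strict_mono_def)
    from LIMSEQ_subseq_LIMSEQ[OF Wb0 this] have "((\<lambda>k. mpow Wb k *v x) \<circ> (\<lambda>k. s * k)) \<longlonglongrightarrow> 0" .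
    ultimately show "x = 0" by (simp add: o_def LIMSEQ_const_iff)
  qed
  have Rbinv: "invertible Rb"
  proof -
    have "Rb = Ui ** (U ** Rb)" by (simp add: Ui_def matrix_mul_assoc inv_props[OF Uinv(1)])
    also have "\<dots> = Ui ** (mat 1 - mpow Wb s)" by (simp add: sidb(4))
    moreover have "invertible Ui"
      unfolding Ui_def invertible_def using inv_props[OF Uinv(1)] by blast
    ultimately show ?thesis using invertible_mult[OF _ inv1] by simp
  qed
  define Rbi where "Rbi = matrix_inv Rb"
  have conj: "mpow Tb k ** Rb = Rb ** mpow Mb k" for k
    by (rule mpow_conj) (simp add: Tbeq Mb_def mm_rdiff mm_ldiff matrix_mul_assoc)
  have Tb_via: "mpow Tb k *v z = Rb *v (mpow Mb k *v (Rbi *v z))" for k z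
  proof -
    have "mpow Tb k = mpow Tb k ** Rb ** Rbi" by (simp add: Rbi_def inv_props[OF Rbinv] matrix_mul_assoc[symmetric])
    also have "\<dots> = Rb ** mpow Mb k ** Rbi" by (simp add: conj)
    finally show ?thesis by (simp add: matrix_vector_mul_assoc matrix_mul_assoc)
  qed
  have Mb_via: "mpow Mb k *v z = Rbi *v (mpow Tb k *v (Rb *v z))" for k z
  proof -
    have "mpow Mb k = Rbi ** Rb ** mpow Mb k" by (simp add: Rbi_def inv_props[OF Rbinv])
    also have "\<dots> = Rbi ** mpow Tb k ** Rb" by (simp add: conj matrix_mul_assoc[symmetric])
    finally show ?thesis by (simp add: matrix_vector_mul_assoc matrix_mul_assoc)
  qed
  have Mb0: "(\<lambda>k. mpow Mb k *v z) \<longlonglongrightarrow> 0" for z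
    by (rule lemB[OF K Ainv KRb Fbinv[unfolded Fbi_def] UFb(3) KRbF[unfolded Fbi_def] KMb Mb_def])
  have "spectral_radius Tb < 1"
  proof (rule F2)
    fix z
    have "(\<lambda>k. Rb *v (mpow Mb k *v (Rbi *v z))) \<longlonglongrightarrow> Rb *v 0"
      by (intro bounded_linear.tendsto[OF matrix_vector_mul_bounded_linear] Mb0)
    then show "(\<lambda>k. (1/1^k) *\<^sub>R (mpow Tb k *v z)) \<longlonglongrightarrow> 0" by (simp add: Tb_via)
  qed simp
  have k1: "Ai ** Mb = Ai - Rb"
    by (simp add: Mb_def mm_ldiff matrix_mul_assoc Ai_def inv_props[OF Ainv(1)])
  have k2: "T ** Ai = Ai - R"
    by (simp add: Teq mm_rdiff matrix_mul_assoc[symmetric] Ai_def inv_props[OF Ainv(1)])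
  have key: "Ai ** Mb = T ** Ai + (R - Rb)"
    by (simp add: k1 k2)
  have order: "K_nonneg K (Ai ** mpow Mb k - mpow T k ** Ai)" for k
  proof (induction k)
    case 0 then show ?case by (simp add: Kn_zero[OF K])
  next
    case (Suc k)
    define X where "X = Ai ** mpow Mb k - mpow T k ** Ai"
    have "Ai ** mpow Mb (Suc k) = (Ai ** mpow Mb k) ** Mb"
      using mpow_comm[of Mb k] by (simp add: matrix_mul_assoc[symmetric])
    also have "\<dots> = X ** Mb + mpow T k ** (Ai ** Mb)"
      by (simp add: X_def mm_rdiff matrix_mul_assoc)
    also have "\<dots> = X ** Mb + mpow T (Suc k) ** Ai + mpow T k ** (R - Rb)"
      using mpow_comm[of T k] by (simp add: key matrix_add_ldistrib matrix_mul_assoc)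
    finally have "Ai ** mpow Mb (Suc k) - mpow T (Suc k) ** Ai = X ** Mb + mpow T k ** (R - Rb)"
      by simp
    then show ?case
      using Kn_add[OF K Kn_mult[OF Suc[folded X_def] KMb] Kn_mult[OF Kn_mpow[OF KT] KD]] by simp
  qed
  have "spectral_radius T \<le> spectral_radius Tb"
  proof (rule ccontr)
    assume nle: "\<not> spectral_radius T \<le> spectral_radius Tb"
    define \<alpha> where "\<alpha> = (spectral_radius T + spectral_radius Tb) / 2"
    have al: "spectral_radius Tb < \<alpha>" "\<alpha> < spectral_radius T" "0 < \<alpha>"
      using nle sr_nonneg[of Tb] by (auto simp: \<alpha>_def)
    have Mbl: "(\<lambda>k. (1/\<alpha>^k) *\<^sub>R (mpow Mb k *v z)) \<longlonglongrightarrow> 0" for z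
    proof -
      have "(\<lambda>k. Rbi *v ((1/\<alpha>^k) *\<^sub>R (mpow Tb k *v (Rb *v z)))) \<longlonglongrightarrow> Rbi *v 0"
        by (intro bounded_linear.tendsto[OF matrix_vector_mul_bounded_linear] F1[OF al(1)])
      then show ?thesis by (simp add: Mb_via matrix_vector_mult_scaleR)
    qed
    obtain e c where ec: "c > 0" "\<forall>x\<in>K. c * norm x \<le> e \<bullet> x" using pos_functional[OF K] by blast
    have TAy: "(\<lambda>k. (1/\<alpha>^k) *\<^sub>R (mpow T k ** Ai) *v y) \<longlonglongrightarrow> 0" if y: "y \<in> K" for y
    proof -
      have bnd: "norm ((1/\<alpha>^k) *\<^sub>R (mpow T k ** Ai) *v y) \<le> (norm e / c) * norm (Ai *v ((1/\<alpha>^k) *\<^sub>R (mpow Mb k *v y)))" for k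
      proof -
        have in1: "(mpow T k ** Ai) *v y \<in> K" using Kn_apply[OF Kn_mult[OF Kn_mpow[OF KT] Ainv(2)[folded Ai_def]] y] .
        have in2: "(Ai ** mpow Mb k - mpow T k ** Ai) *v y \<in> K" using Kn_apply[OF order y] .
        have "c * norm ((mpow T k ** Ai) *v y) \<le> e \<bullet> ((mpow T k ** Ai) *v y)" using ec in1 by blast
        also have "\<dots> \<le> e \<bullet> ((Ai ** mpow Mb k) *v y)"
        proof -
          have "0 \<le> e \<bullet> ((Ai ** mpow Mb k - mpow T k ** Ai) *v y)" using e_nonneg ec in2 by blast
          then show ?thesis by (simp add: matrix_vector_mult_diff_rdistrib inner_diff_right)
        qed
        also have "\<dots> \<le> norm e * norm ((Ai ** mpow Mb k) *v y)" by (rule norm_cauchy_schwarz)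
        finally have "c * norm ((mpow T k ** Ai) *v y) \<le> norm e * norm ((Ai ** mpow Mb k) *v y)" .
        then have "norm ((mpow T k ** Ai) *v y) \<le> (norm e / c) * norm ((Ai ** mpow Mb k) *v y)"
          using ec(1) by (simp add: field_simps)
        then have "(1/\<alpha>^k) * norm ((mpow T k ** Ai) *v y) \<le> (1/\<alpha>^k) * ((norm e / c) * norm ((Ai ** mpow Mb k) *v y))"
          using al(3) by (intro mult_left_mono) auto
        then show ?thesis using al(3)
          by (simp add: scale_mv matrix_vector_mult_scaleR matrix_vector_mul_assoc[symmetric] mult_ac)
      qed
      have "(\<lambda>k. Ai *v ((1/\<alpha>^k) *\<^sub>R (mpow Mb k *v y))) \<longlonglongrightarrow> Ai *v 0"
        by (rule bounded_linear.tendsto[OF matrix_vector_mul_bounded_linear Mbl])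
      then have "(\<lambda>k. norm (Ai *v ((1/\<alpha>^k) *\<^sub>R (mpow Mb k *v y)))) \<longlonglongrightarrow> norm (Ai *v 0)"
        by (rule tendsto_norm)
      then have "(\<lambda>k. (norm e / c) * norm (Ai *v ((1/\<alpha>^k) *\<^sub>R (mpow Mb k *v y)))) \<longlonglongrightarrow> (norm e / c) * norm (Ai *v 0)"
        by (rule tendsto_mult[OF tendsto_const])
      then have lim: "(\<lambda>k. (norm e / c) * norm (Ai *v ((1/\<alpha>^k) *\<^sub>R (mpow Mb k *v y)))) \<longlonglongrightarrow> 0" by simp
      have bnd': "\<forall>k. norm ((1/\<alpha>^k) *\<^sub>R (mpow T k ** Ai) *v y) \<le> (norm e / c) * norm (Ai *v ((1/\<alpha>^k) *\<^sub>R (mpow Mb k *v y)))"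
        using bnd by blast
      show ?thesis by (rule Lim_null_comparison[OF always_eventually[OF bnd'] lim])
    qed
    have "spectral_radius T < \<alpha>"
    proof (rule F2[OF al(3)])
      fix z
      have AiA: "Ai *v (A *v z) = z" by (simp add: matrix_vector_mul_assoc Ai_def inv_props[OF Ainv(1)])
      have "(\<lambda>k. ((1/\<alpha>^k) *\<^sub>R (mpow T k ** Ai)) *v (A *v z)) \<longlonglongrightarrow> 0"
        by (rule span_tendsto[OF K]) (rule TAy)
      moreover have "((1/\<alpha>^k) *\<^sub>R (mpow T k ** Ai)) *v (A *v z) = (1/\<alpha>^k) *\<^sub>R (mpow T k *v z)" for k
      proof -
        have "((1/\<alpha>^k) *\<^sub>R (mpow T k ** Ai)) *v (A *v z) = (1/\<alpha>^k) *\<^sub>R ((mpow T k ** Ai) *v (A *v z))"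
          by (rule scale_mv)
        also have "(mpow T k ** Ai) *v (A *v z) = mpow T k *v (Ai *v (A *v z))"
          by (simp add: matrix_vector_mul_assoc matrix_mul_assoc)
        finally show ?thesis by (simp add: AiA)
      qed
      ultimately show "(\<lambda>k. (1/\<alpha>^k) *\<^sub>R (mpow T k *v z)) \<longlonglongrightarrow> 0" by simp
    qed
    with al(2) show False by simp
  qed
  with \<open>spectral_radius Tb < 1\<close> show ?thesis
    by (simp add: T_def Tb_def H_def Hb_def Fi_def Fbi_def)
qed

end
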